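(* Let $n\geq 2$ and let $C$ be a $2$-null CRC in $G_n$ with covering radius $\rho\geq 2$, $c_1\leq 2$, $c_2\geq 3$, and $\mathbf{0}\in C$. Then every word of type $1100$ lying in $C_2$ belongs to the interval graph $I(y)$ of some word $y\in C$ of weight four.
   Context: $G_n$ is the graph with vertex set $\mathbb{Z}^n$, $x\sim y$ iff $\sum_i|x_i-y_i|=1$; $d$ is its graph distance, weight of $x$ is $d(x,\mathbf{0})$. For a code $C$ with covering radius $\rho$, $C_i=\{v:d(v,C)=i\}$. $C$ is a CRC if for all $i,j$ every vertex of $C_i$ has the same number $\alpha_{ij}$ of neighbours in $C_j$, with $\alpha_{ij}=0$ for $|i-j|>1$; $a_i=\alpha_{ii}$, $b_i=\alpha_{i,i+1}$, $c_i=\alpha_{i,i-1}$. $C$ is $r$-null if $a_0=\cdots=a_{r-1}=0$. The type of a word of weight at most four is the nonincreasing sequence of its four largest absolute entry values; type $1100$ means exactly two entries $\pm1$, rest $0$. For a vertex $y$, the interval graph $I(y)$ is the subgraph of $G_n$ induced by $\{z: d(\mathbf{0},z)+d(z,y)=d(\mathbf{0},y)\}$. *)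

theory Defs
  imports "HOL-Analysis.Analysis"
begin

text \<open>The graph G_n: vertex set Z^n (here int^'n with n = CARD('n)),
  x ~ y iff sum_i |x_i - y_i| = 1.\<close>

definition gadj :: "(int^'n) \<Rightarrow> (int^'n) \<Rightarrow> bool" where
  "gadj x y \<longleftrightarrow> (\<Sum>i\<in>UNIV. \<bar>x $ i - y $ i\<bar>) = 1"

definition gedges :: "((int^'n) \<times> (int^'n)) set" where
  "gedges = {(x, y). gadj x y}"

definition gdist :: "(int^'n) \<Rightarrow> (int^'n) \<Rightarrow> nat" where
  "gdist x y = (LEAST k. (x, y) \<in> gedges ^^ k)"

definition nbrs :: "(int^'n) \<Rightarrow> (int^'n) set" where
  "nbrs x = {y. gadj x y}"

definition weight :: "(int^'n) \<Rightarrow> nat" where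
  "weight x = gdist x 0"

definition cdist :: "(int^'n) set \<Rightarrow> (int^'n) \<Rightarrow> nat" where
  "cdist C v = (LEAST k. \<exists>c\<in>C. gdist v c = k)"

definition covering_radius :: "(int^'n) set \<Rightarrow> nat \<Rightarrow> bool" where
  "covering_radius C \<rho> \<longleftrightarrow> C \<noteq> {} \<and> (\<forall>v. cdist C v \<le> \<rho>) \<and> (\<exists>v. cdist C v = \<rho>)"

definition layer :: "(int^'n) set \<Rightarrow> nat \<Rightarrow> (int^'n) set" where
  "layer C i = {v. cdist C v = i}"

definition alpha :: "(int^'n) set \<Rightarrow> nat \<Rightarrow> nat \<Rightarrow> nat" where
  "alpha C i j = (THE k. \<forall>v\<in>layer C i. card (nbrs v \<inter> layer C j) = k)"

definition is_CRC :: "(int^'n) set \<Rightarrow> nat \<Rightarrow> bool" where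
  "is_CRC C \<rho> \<longleftrightarrow> covering_radius C \<rho> \<and>
     (\<forall>i\<le>\<rho>. \<forall>j\<le>\<rho>. \<exists>k. \<forall>v\<in>layer C i. card (nbrs v \<inter> layer C j) = k) \<and>
     (\<forall>i\<le>\<rho>. \<forall>j\<le>\<rho>. (i > j + 1 \<or> j > i + 1) \<longrightarrow> alpha C i j = 0)"

definition crc_a :: "(int^'n) set \<Rightarrow> nat \<Rightarrow> nat" where "crc_a C i = alpha C i i"
definition crc_b :: "(int^'n) set \<Rightarrow> nat \<Rightarrow> nat" where "crc_b C i = alpha C i (i + 1)"
definition crc_c :: "(int^'n) set \<Rightarrow> nat \<Rightarrow> nat" where "crc_c C i = alpha C i (i - 1)"

definition r_null :: "(int^'n) set \<Rightarrow> nat \<Rightarrow> bool" where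
  "r_null C r \<longleftrightarrow> (\<forall>i<r. crc_a C i = 0)"

definition type_1100 :: "(int^'n) \<Rightarrow> bool" where
  "type_1100 x \<longleftrightarrow> card {i. \<bar>x $ i\<bar> = 1} = 2 \<and> (\<forall>i. x $ i \<noteq> 0 \<longrightarrow> \<bar>x $ i\<bar> = 1)"

definition interval :: "(int^'n) \<Rightarrow> (int^'n) set" where
  "interval y = {z. gdist 0 z + gdist z y = gdist 0 y}"

end

theory Submission
  imports Defs
begin

definition NN :: "(int^'n) \<Rightarrow> int" where "NN v = (\<Sum>i\<in>UNIV. \<bar>v $ i\<bar>)"
definition uv :: "'n \<Rightarrow> int \<Rightarrow> (int^'n)" where "uv k s = (\<chi> i. if i = k then s else 0)"

lemma NN_nonneg: "NN v \<ge> 0" unfolding NN_def by (simp add: sum_nonneg)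

lemma NN_neg: "NN (- v) = NN v" unfolding NN_def by simp

lemma NN_sub: "NN (x - y) = NN (y - x)"
  using NN_neg[of "x - y"] by simp

lemma NN_add_le: "NN (a + b) \<le> NN a + NN b"
  unfolding NN_def sum.distrib[symmetric] by (rule sum_mono) (simp add: abs_triangle_ineq)

lemma NN_upd: "NN (v + uv k s) = NN v - \<bar>v $ k\<bar> + \<bar>v $ k + s\<bar>"
proof -
  have "NN (v + uv k s) = (\<Sum>i\<in>UNIV. if i = k then \<bar>v $ k + s\<bar> else \<bar>v $ i\<bar>)"
    unfolding NN_def uv_def by (rule sum.cong) auto
  also have "\<dots> = \<bar>v $ k + s\<bar> + (\<Sum>i\<in>UNIV - {k}. \<bar>v $ i\<bar>)"
    by (simp add: sum.delta_remove)
  also have "NN v = \<bar>v $ k\<bar> + (\<Sum>i\<in>UNIV - {k}. \<bar>v $ i\<bar>)"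
    unfolding NN_def by (rule sum.remove) auto
  ultimately show ?thesis by simp
qed

lemma NN_uv: "NN (uv k s) = \<bar>s\<bar>"
  using NN_upd[of 0 k s] by (simp add: NN_def)

lemma gadj_iff: "gadj x y \<longleftrightarrow> NN (x - y) = 1"
  unfolding gadj_def NN_def by simp

lemma adj_step:
  assumes "NN (x - y) = 1"
  shows "\<exists>k s. \<bar>s\<bar> = 1 \<and> y = x + uv k s"
proof -
  define t where "t = y - x"
  have Nt: "NN t = 1" using assms NN_sub unfolding t_def by metis
  have "\<exists>k. t $ k \<noteq> 0"
  proof (rule ccontr)
    assume "\<not> ?thesis"
    then have "NN t = 0" unfolding NN_def by simp
    with Nt show False by simp
  qed
  then obtain k where k: "t $ k \<noteq> 0" by blast
  have split: "NN t = \<bar>t $ k\<bar> + (\<Sum>i\<in>UNIV - {k}. \<bar>t $ i\<bar>)"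
    unfolding NN_def by (rule sum.remove) auto
  have rest: "(\<Sum>i\<in>UNIV - {k}. \<bar>t $ i\<bar>) \<ge> 0" by (simp add: sum_nonneg)
  have tk: "\<bar>t $ k\<bar> = 1" using split rest k Nt by linarith
  then have "(\<Sum>i\<in>UNIV - {k}. \<bar>t $ i\<bar>) = 0" using split Nt by linarith
  then have z: "\<forall>i\<in>UNIV - {k}. \<bar>t $ i\<bar> = 0"
    by (subst (asm) sum_nonneg_eq_0_iff) auto
  have "y = x + uv k (t $ k)"
  proof (subst vec_eq_iff, intro allI)
    fix i
    show "y $ i = (x + uv k (t $ k)) $ i"
      using z unfolding uv_def t_def by (cases "i = k") auto
  qed
  with tk show ?thesis by blast
qed

lemma step_adj: "\<bar>s\<bar> = 1 \<Longrightarrow> NN (x - (x + uv k s)) = 1"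
  using NN_uv[of k s] NN_neg[of "uv k s"] by simp

lemma relpow_le: "(x, y) \<in> gedges ^^ m \<Longrightarrow> NN (x - y) \<le> int m"
proof (induction m arbitrary: y)
  case 0
  then show ?case by (simp add: NN_def)
next
  case (Suc m)
  then obtain u where u: "(x, u) \<in> gedges ^^ m" "(u, y) \<in> gedges" by auto
  have "NN (x - y) \<le> NN (x - u) + NN (u - y)"
    using NN_add_le[of "x - u" "u - y"] by simp
  moreover have "NN (u - y) = 1" using u(2) by (simp add: gedges_def gadj_iff)
  ultimately show ?case using Suc.IH[OF u(1)] by simp
qed

lemma relpow_ex: "NN (x - y) = int m \<Longrightarrow> (x, y) \<in> gedges ^^ m"
proof (induction m arbitrary: x)
  case 0
  then have "(\<Sum>i\<in>UNIV. \<bar>(x - y) $ i\<bar>) = 0" unfolding NN_def by simp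
  then have "\<forall>i. \<bar>(x - y) $ i\<bar> = 0"
    by (subst (asm) sum_nonneg_eq_0_iff) auto
  then have "x = y" by (simp add: vec_eq_iff)
  then show ?case by simp
next
  case (Suc m)
  have "\<exists>k. (x - y) $ k \<noteq> 0"
  proof (rule ccontr)
    assume "\<not> ?thesis"
    then have "NN (x - y) = 0" unfolding NN_def by simp
    with Suc.prems show False by simp
  qed
  then obtain k where k: "(x - y) $ k \<noteq> 0" by blast
  define s where "s = - sgn ((x - y) $ k)"
  have s1: "\<bar>s\<bar> = 1" using k unfolding s_def by (simp add: abs_sgn)
  define x' where "x' = x + uv k s"
  have "x' - y = (x - y) + uv k s" unfolding x'_def by simp
  then have "NN (x' - y) = NN (x - y) - \<bar>(x - y) $ k\<bar> + \<bar>(x - y) $ k + s\<bar>"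
    using NN_upd[of "x - y" k s] by metis
  moreover have "\<bar>(x - y) $ k + s\<bar> = \<bar>(x - y) $ k\<bar> - 1"
    using k unfolding s_def by (cases "(x - y) $ k > 0") (auto simp: sgn_if)
  ultimately have "NN (x' - y) = int m" using Suc.prems by simp
  then have "(x', y) \<in> gedges ^^ m" by (rule Suc.IH)
  moreover have "(x, x') \<in> gedges"
    unfolding gedges_def x'_def using step_adj[OF s1] by (simp add: gadj_iff)
  ultimately show ?case by (metis relpow_Suc_I2)
qed

lemma gdist_NN: "gdist x y = nat (NN (x - y))"
  unfolding gdist_def
proof (rule Least_equality)
  show "(x, y) \<in> gedges ^^ nat (NN (x - y))"
    by (rule relpow_ex) (simp add: NN_nonneg)
next
  fix m assume "(x, y) \<in> gedges ^^ m"
  then show "nat (NN (x - y)) \<le> m" using relpow_le by fastforce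
qed


lemma nbrs_iff: "y \<in> nbrs v \<longleftrightarrow> NN (v - y) = 1"
  unfolding nbrs_def by (simp add: gadj_iff)

lemma finite_nbrs: "finite (nbrs v)"
proof -
  have "nbrs v \<subseteq> (\<lambda>(k, s). v + uv k s) ` (UNIV \<times> {-1, 1})"
  proof
    fix y assume "y \<in> nbrs v"
    then obtain k s where "\<bar>s\<bar> = 1" "y = v + uv k s"
      using adj_step nbrs_iff by metis
    moreover then have "s \<in> {-1, 1}" by auto
    ultimately show "y \<in> (\<lambda>(k, s). v + uv k s) ` (UNIV \<times> {-1, 1})" by force
  qed
  then show ?thesis by (rule finite_subset) simp
qed

lemma uv_neg: "uv k (- a) = - uv k a"
  unfolding uv_def by (simp add: vec_eq_iff)

lemma uv_comp: "uv k s $ i = (if i = k then s else 0)"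
  unfolding uv_def by simp

lemma step_NN:
  assumes "NN (z - y) = 1"
  shows "NN y = NN z + 1 \<or> NN y = NN z - 1"
proof -
  obtain k s where ks: "\<bar>s\<bar> = 1" "y = z + uv k s" using adj_step[OF assms] by blast
  then have "NN y = NN z - \<bar>z $ k\<bar> + \<bar>z $ k + s\<bar>" using NN_upd by simp
  moreover have "\<bar>z $ k + s\<bar> = \<bar>z $ k\<bar> + 1 \<or> \<bar>z $ k + s\<bar> = \<bar>z $ k\<bar> - 1"
    using ks(1) by arith
  ultimately show ?thesis by linarith
qed

lemma keyK:
  assumes "NN (z - y) = 1" "NN (z - y') = 1" "NN y = NN z - 1" "NN y' = NN z - 1" "y \<noteq> y'"
  shows "NN (y + y' - z) = NN z - 2"
proof -
  obtain k s where ks: "\<bar>s\<bar> = 1" "y = z + uv k s" using adj_step[OF assms(1)] by blast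
  obtain k' s' where ks': "\<bar>s'\<bar> = 1" "y' = z + uv k' s'" using adj_step[OF assms(2)] by blast
  have a: "\<bar>z $ k + s\<bar> = \<bar>z $ k\<bar> - 1" using assms(3) NN_upd[of z k s] ks by simp
  have b: "\<bar>z $ k' + s'\<bar> = \<bar>z $ k'\<bar> - 1" using assms(4) NN_upd[of z k' s'] ks' by simp
  show ?thesis
  proof (cases "k = k'")
    case True
    then have "s \<noteq> s'" using ks ks' assms(5) by auto
    then have "s' = - s" using ks(1) ks'(1) by arith
    then have "\<bar>z $ k - s\<bar> = \<bar>z $ k\<bar> - 1" using b True by simp
    then have False using a ks(1) by arith
    then show ?thesis ..
  next
    case False
    have e: "y + y' - z = y + uv k' s'" using ks' by simp
    have "y $ k' = z $ k'" using ks(2) False by (simp add: uv_comp)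
    then have "NN (y + uv k' s') = NN y - \<bar>z $ k'\<bar> + \<bar>z $ k' + s'\<bar>"
      using NN_upd[of y k' s'] by simp
    then have "NN (y + uv k' s') = NN z - 2" using b assms(3) by simp
    then show ?thesis using e by metis
  qed
qed


theorem mainTheorem3:
  fixes C :: "(int^'n) set" and \<rho> :: nat
  assumes "CARD('n) \<ge> 2"
    and "is_CRC C \<rho>"
    and "r_null C 2"
    and "\<rho> \<ge> 2"
    and "crc_c C 1 \<le> 2"
    and "crc_c C 2 \<ge> 3"
    and "0 \<in> C"
  shows "\<forall>x. type_1100 x \<and> x \<in> layer C 2 \<longrightarrow>
           (\<exists>y\<in>C. weight y = 4 \<and> x \<in> interval y)"
proof (intro allI impI)
  fix x :: "int^'n"
  assume xh: "type_1100 x \<and> x \<in> layer C 2"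
  have crc1: "covering_radius C \<rho>"
    using assms(2) unfolding is_CRC_def by (rule conjunct1)
  have crc2: "\<forall>i\<le>\<rho>. \<forall>j\<le>\<rho>. \<exists>k. \<forall>v\<in>layer C i. card (nbrs v \<inter> layer C j) = k"
    using assms(2) unfolding is_CRC_def by (rule conjunct1[OF conjunct2])
  have Cne: "C \<noteq> {}" using crc1 unfolding covering_radius_def by (rule conjunct1)
  have alph: "card (nbrs v \<inter> layer C j) = alpha C i j"
    if hij: "i \<le> \<rho>" "j \<le> \<rho>" and hv: "v \<in> layer C i" for i j v
  proof -
    obtain k where k: "\<forall>v\<in>layer C i. card (nbrs v \<inter> layer C j) = k"
      using crc2 hij by blast
    have "alpha C i j = k" unfolding alpha_def
      by (rule the_equality) (use k hv in auto)
    then show ?thesis using k hv by simp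
  qed
  have cd0: "cdist C v = 0 \<longleftrightarrow> v \<in> C" for v
  proof
    assume "cdist C v = 0"
    then have "\<exists>c\<in>C. gdist v c = 0" unfolding cdist_def
      using LeastI_ex[of "\<lambda>k. \<exists>c\<in>C. gdist v c = k"] Cne by force
    then obtain c where "c \<in> C" "nat (NN (v - c)) = 0" by (auto simp: gdist_NN)
    moreover then have "NN (v - c) = 0" using NN_nonneg[of "v - c"] by simp
    then have "\<forall>i. \<bar>(v - c) $ i\<bar> = 0" unfolding NN_def
      by (subst (asm) sum_nonneg_eq_0_iff) auto
    then have "v = c" by (simp add: vec_eq_iff)
    ultimately show "v \<in> C" by simp
  next
    assume "v \<in> C"
    moreover have "gdist v v = 0" by (simp add: gdist_NN NN_def)
    ultimately have "\<exists>c\<in>C. gdist v c = 0" by blast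
    then show "cdist C v = 0" unfolding cdist_def
      by (intro Least_equality) auto
  qed
  have layer0: "layer C 0 = C" unfolding layer_def using cd0 by auto
  have a0: "nbrs c \<inter> C = {}" if "c \<in> C" for c
  proof -
    have "crc_a C 0 = 0" using assms(3) unfolding r_null_def by simp
    then have "card (nbrs c \<inter> C) = 0" using alph[of 0 0 c] that layer0
      unfolding crc_a_def by simp
    then show ?thesis using finite_nbrs[of c] by simp
  qed
  have layer1: "v \<in> layer C 1" if "v \<notin> C" "c \<in> C" "NN (v - c) = 1" for v c
  proof -
    have "cdist C v \<le> gdist v c" unfolding cdist_def
      by (rule Least_le) (use that in blast)
    then have "cdist C v \<le> 1" using that by (simp add: gdist_NN)
    moreover have "cdist C v \<noteq> 0" using cd0 that by blast
    ultimately show ?thesis unfolding layer_def by simp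
  qed
  have c1: "card (nbrs v \<inter> C) = crc_c C 1" if "v \<in> layer C 1" for v
    using alph[of 1 0 v] that assms(4) layer0 unfolding crc_c_def by simp
  have xl2: "x \<in> layer C 2" using xh by (rule conjunct2)
  have "cdist C x = 2" using xl2 unfolding layer_def by simp
  then have xnC: "x \<notin> C" using cd0[of x] by simp
  define S where "S = {i. \<bar>x $ i\<bar> = 1}"
  have ty: "card {i. \<bar>x $ i\<bar> = 1} = 2 \<and> (\<forall>i. x $ i \<noteq> 0 \<longrightarrow> \<bar>x $ i\<bar> = 1)"
    using xh unfolding type_1100_def by (rule conjunct1)
  have cS: "card S = 2" using ty unfolding S_def by (rule conjunct1)
  have x01: "\<And>i. x $ i \<noteq> 0 \<Longrightarrow> \<bar>x $ i\<bar> = 1" using ty by blast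
  have Nx: "NN x = 2"
  proof -
    have "\<bar>x $ i\<bar> = (if i \<in> S then 1 else 0)" for i
    proof (cases "x $ i = 0")
      case True then show ?thesis unfolding S_def by simp
    next
      case False then show ?thesis using x01[OF False] unfolding S_def by simp
    qed
    then have "NN x = (\<Sum>i\<in>UNIV. if i \<in> S then 1 else 0)"
      unfolding NN_def by presburger
    also have "\<dots> = (\<Sum>i\<in>{i\<in>UNIV. i \<in> S}. 1)" by (rule sum.inter_filter[symmetric]) simp
    also have "\<dots> = int (card S)" by simp
    finally show ?thesis using cS by simp
  qed
  define B where "B = (\<lambda>k. x - uv k (x $ k)) ` S"
  have cB: "card B \<le> 2" unfolding B_def using card_image_le[of S "\<lambda>k. x - uv k (x $ k)"] cS by simp
  define A where "A = nbrs x \<inter> layer C 1"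
  have cA: "card A \<ge> 3" using alph[of 2 1 x] xl2 assms(4,6) unfolding A_def crc_c_def by simp
  have "\<not> A \<subseteq> B"
  proof
    assume "A \<subseteq> B"
    then have "card A \<le> card B" by (rule card_mono[rotated]) (simp add: B_def)
    with cA cB show False by simp
  qed
  then obtain z where zA: "z \<in> A" and zB: "z \<notin> B" by blast
  have xz: "NN (x - z) = 1" using zA unfolding A_def by (simp add: nbrs_iff)
  have Nz: "NN z = 3"
  proof -
    obtain k s where ks: "\<bar>s\<bar> = 1" "z = x + uv k s" using adj_step[OF xz] by blast
    have e: "NN z = 2 - \<bar>x $ k\<bar> + \<bar>x $ k + s\<bar>" using NN_upd[of x k s] ks Nx by simp
    show ?thesis
    proof (cases "x $ k = 0")
      case True then show ?thesis using e ks by simp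
    next
      case False
      then have xk: "\<bar>x $ k\<bar> = 1" using x01 by blast
      have "x $ k + s \<noteq> 0"
      proof
        assume "x $ k + s = 0"
        then have "s = - (x $ k)" by simp
        then have "z = x - uv k (x $ k)" using ks uv_neg by simp
        moreover have "k \<in> S" using xk S_def by simp
        ultimately show False using zB unfolding B_def by blast
      qed
      then show ?thesis using e xk ks(1) by arith
    qed
  qed
  have zl1: "z \<in> layer C 1" using zA unfolding A_def by blast
  obtain y1 where y1C: "y1 \<in> C" and zy1': "gdist z y1 = 1"
  proof -
    have "cdist C z = 1" using zl1 unfolding layer_def by simp
    moreover have "\<exists>c\<in>C. gdist z c = cdist C z" unfolding cdist_def
      using LeastI_ex[of "\<lambda>k. \<exists>c\<in>C. gdist z c = k"] Cne by force
    ultimately show ?thesis using that by metis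
  qed
  have zy1: "NN (z - y1) = 1" using zy1' NN_nonneg[of "z - y1"] by (simp add: gdist_NN)
  have cz: "card (nbrs z \<inter> C) = crc_c C 1" using c1 zl1 by blast
  show "\<exists>y\<in>C. weight y = 4 \<and> x \<in> interval y"
  proof (rule ccontr)
    assume no: "\<not> ?thesis"
    have w2: "NN y = 2" if "y \<in> C" "NN (z - y) = 1" for y
    proof (rule ccontr)
      assume "NN y \<noteq> 2"
      then have Ny: "NN y = 4" using step_NN[OF that(2)] Nz by simp
      have "NN (x - y) \<le> NN (x - z) + NN (z - y)" using NN_add_le[of "x - z" "z - y"] by simp
      moreover have "NN y \<le> NN x + NN (y - x)" using NN_add_le[of x "y - x"] by simp
      ultimately have "NN (x - y) = 2" using xz that(2) Ny Nx NN_sub[of x y] by simp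
      then have "weight y = 4 \<and> x \<in> interval y"
        unfolding weight_def interval_def using Nx Ny NN_neg[of x] NN_neg[of y]
        by (simp add: gdist_NN)
      then show False using no that(1) by blast
    qed
    have wl: "w \<in> layer C 1 \<and> 0 \<in> nbrs w \<inter> C" if "NN w = 1" for w
    proof -
      have "w \<in> nbrs 0" using that NN_neg[of w] by (simp add: nbrs_iff)
      then have "w \<notin> C" using a0[OF assms(7)] by blast
      then show ?thesis using layer1[of w 0] that assms(7) NN_neg[of w] by (simp add: nbrs_iff)
    qed
    have y1N: "NN y1 = 2" using w2 y1C zy1 by blast
    define w1 where "w1 = x + y1 - z"
    have "NN w1 = 1" unfolding w1_def
      using keyK[of z x y1] NN_sub[of x z] zy1 xz Nx Nz y1N xnC y1C by fastforce
    then have w1l: "w1 \<in> layer C 1" and w10: "0 \<in> nbrs w1 \<inter> C" using wl by auto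
    have "y1 \<in> nbrs w1" unfolding w1_def nbrs_iff using xz by (simp add: algebra_simps)
    then have "{0, y1} \<subseteq> nbrs w1 \<inter> C" using w10 y1C by blast
    then have "card {0, y1} \<le> card (nbrs w1 \<inter> C)"
      by (rule card_mono[rotated]) (simp add: finite_nbrs)
    then have "card {0, y1} \<le> crc_c C 1" using c1[OF w1l] by simp
    moreover have "(0::int^'n) \<noteq> y1" using y1N by (auto simp: NN_def)
    ultimately have "card (nbrs z \<inter> C) \<ge> 2" using cz by simp
    moreover have "y1 \<in> nbrs z \<inter> C" using zy1 y1C nbrs_iff by blast
    ultimately obtain y2 where y2: "y2 \<in> nbrs z \<inter> C" "y2 \<noteq> y1"
    proof -
      have "\<not> nbrs z \<inter> C \<subseteq> {y1}"
      proof
        assume "nbrs z \<inter> C \<subseteq> {y1}"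
        then have "card (nbrs z \<inter> C) \<le> card {y1}" by (rule card_mono[rotated]) simp
        then have "card (nbrs z \<inter> C) \<le> 1" by simp
        with \<open>card (nbrs z \<inter> C) \<ge> 2\<close> show False by simp
      qed
      then show ?thesis using that by blast
    qed
    have zy2: "NN (z - y2) = 1" using y2 nbrs_iff by blast
    have y2N: "NN y2 = 2" using w2 y2 zy2 by blast
    define w2 where "w2 = y1 + y2 - z"
    have "NN w2 = 1" unfolding w2_def
      using keyK[of z y1 y2] zy1 zy2 Nz y1N y2N y2(2) by simp
    then have w2l: "w2 \<in> layer C 1" and w20: "0 \<in> nbrs w2 \<inter> C" using wl by auto
    have "y1 \<in> nbrs w2" unfolding w2_def nbrs_iff using zy2 NN_sub[of z y2] by (simp add: algebra_simps)
    moreover have "y2 \<in> nbrs w2" unfolding w2_def nbrs_iff using zy1 NN_sub[of z y1] by (simp add: algebra_simps)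
    ultimately have "{0, y1, y2} \<subseteq> nbrs w2 \<inter> C" using w20 y1C y2 by blast
    then have "card {0, y1, y2} \<le> card (nbrs w2 \<inter> C)"
      by (rule card_mono[rotated]) (simp add: finite_nbrs)
    then have "card {0, y1, y2} \<le> crc_c C 1" using c1[OF w2l] by simp
    moreover have "(0::int^'n) \<noteq> y1" "(0::int^'n) \<noteq> y2" using y1N y2N by (auto simp: NN_def)
    ultimately have "3 \<le> crc_c C 1" using y2(2) by simp
    then show False using assms(5) by simp
  qed
qed

end
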